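(* For each $k$ (indices mod $8g-4$), the arc length of $T_k([P_{k+2},Q_{k+2}])$ is less than half the arc length of $[P_{\sigma(k)},Q_{\sigma(k)}]$, and the arc length of $T_k([P_{k-1},Q_{k-1}])$ is less than half the arc length of $[P_{\sigma(k)+1},Q_{\sigma(k)+1}]$.
   Context: Setting. Fix $g\ge 2$; indices are mod $8g-4$. Let $\mathcal F$ be the regular hyperbolic $(8g-4)$-gon in the unit disk centered at $0$ with all interior angles $\pi/2$, sides labeled $1,\dots,8g-4$ counterclockwise, side $i$ joining vertices $V_i$ and $V_{i+1}$. The complete geodesic extending side $i$ goes from $P_i$ (beyond $V_i$) to $Q_{i+1}$ (beyond $V_{i+1}$) on the unit circle; counterclockwise order $P_1,Q_1,P_2,Q_2,\dots,P_{8g-4},Q_{8g-4}$. $\sigma(i)=4g-i$ ($i$ odd), $\sigma(i)=2-i$ ($i$ even). $T_i$ is the Möbius transformation mapping side $i$ onto side $\sigma(i)$, with isometric circle the geodesic $P_iQ_{i+1}$, mapped onto the geodesic $Q_{\sigma(i)+1}P_{\sigma(i)}$, inside to outside. Arcs $[A,B]$ are counterclockwise from $A$ to $B$. *)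

theory Defs
  imports "HOL-Analysis.Analysis"
begin

text \<open>N = 8g-4. Indices are integers; everything below is N-periodic in the
index (via cis), so "indices mod N" is automatic. The polygon is placed (up to a
rotation, which does not affect arc lengths) so that side i has its midpoint on the
ray of angle phi i = 2 pi i / N; vertex V_i lies on the ray of angle (2i-1) pi / N.
The complete geodesic through side i is the circle orthogonal to the unit circle
with endpoints at angles phi i - alpha (= P_i) and phi i + alpha (= Q_(i+1)),
where sin alpha = sqrt 2 * sin (pi/N) (from cosh r = cos(pi/4)/sin(pi/N) for the
regular N-gon with interior angles pi/2 and cosh r = 1/sin alpha).\<close>

definition NN :: "nat \<Rightarrow> nat" where "NN g = 8*g - 4"

definition phi :: "nat \<Rightarrow> int \<Rightarrow> real" where
  "phi g i = 2 * pi * real_of_int i / real (NN g)"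

definition alpha :: "nat \<Rightarrow> real" where
  "alpha g = arcsin (sqrt 2 * sin (pi / real (NN g)))"

definition Pt :: "nat \<Rightarrow> int \<Rightarrow> complex" where
  "Pt g i = cis (phi g i - alpha g)"

definition Qt :: "nat \<Rightarrow> int \<Rightarrow> complex" where
  "Qt g i = cis (phi g (i - 1) + alpha g)"

definition sigma :: "int \<Rightarrow> int \<Rightarrow> int" where
  "sigma g i = (if odd i then 4 * g - i else 2 - i)"

text \<open>Isometric circle of T_i: the geodesic P_i Q_(i+1), i.e. the Euclidean circle
with centre c_i = cis (phi i) / cos alpha and radius tan alpha.
T_i = (reflection in the line through 0 mapping c_i to c_(sigma i)) composed with
(inversion in the isometric circle); this is the unique disk-preserving Moebius map
with isometric circle P_i Q_(i+1) mapping it onto Q_(sigma i + 1) P_(sigma i).\<close>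

definition ctr :: "nat \<Rightarrow> int \<Rightarrow> complex" where
  "ctr g i = cis (phi g i) / complex_of_real (cos (alpha g))"

definition Tm :: "nat \<Rightarrow> int \<Rightarrow> complex \<Rightarrow> complex" where
  "Tm g i z = cis (phi g i + phi g (sigma (int g) i)) *
      (cnj (ctr g i) + complex_of_real ((tan (alpha g))\<^sup>2) / (z - ctr g i))"

definition ccw_angle :: "complex \<Rightarrow> complex \<Rightarrow> real" where
  "ccw_angle A B = (if Arg (B / A) \<ge> 0 then Arg (B / A) else Arg (B / A) + 2 * pi)"

definition ccw_arc :: "complex \<Rightarrow> complex \<Rightarrow> complex set" where
  "ccw_arc A B = {A * cis t | t. 0 \<le> t \<and> t \<le> ccw_angle A B}"

definition has_arc_length :: "complex set \<Rightarrow> real \<Rightarrow> bool" where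
  "has_arc_length S l \<longleftrightarrow> (\<exists>A. cmod A = 1 \<and> 0 \<le> l \<and> l < 2 * pi \<and>
      S = {A * cis t | t. 0 \<le> t \<and> t \<le> l})"

end

theory Submission
  imports Defs
begin

lemma L1: "(1 + \<i> * complex_of_real v) / (1 - \<i> * complex_of_real v) = cis (2 * arctan v)"
proof -
  define y where "y = arctan v"
  have c: "cos y > 0" unfolding y_def by (simp add: cos_arctan add_pos_nonneg)
  have v: "v = sin y / cos y" unfolding y_def by (metis tan_arctan tan_def)
  have ne: "1 - \<i> * complex_of_real v \<noteq> 0" by (simp add: complex_eq_iff)
  have sc: "(sin y)^2 + (cos y)^2 = 1" by simp
  have Re: "cos (2*y) + v * sin (2*y) = 1"
    unfolding v cos_double sin_double using c sc by (simp add: field_simps power2_eq_square)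
  have sc2: "cos y * (cos y * sin y) + sin y * (sin y * sin y) = sin y"
  proof -
    have e: "cos y * cos y + sin y * sin y = 1" by (rule sin_cos_squared_add3)
    then show ?thesis by algebra
  qed
  have Im: "sin (2*y) - v * cos (2*y) = v"
    unfolding v cos_double sin_double using c sc2 by (simp add: field_simps power2_eq_square)
  have "(1 - \<i> * complex_of_real v) * cis (2*y) = 1 + \<i> * complex_of_real v"
    using Re Im by (simp add: complex_eq_iff algebra_simps)
  then show ?thesis using ne unfolding y_def by (simp add: field_simps)
qed

lemma L2: assumes "-pi < t" "t < pi" shows "cis t = (1 + \<i> * complex_of_real (tan (t/2))) / (1 - \<i> * complex_of_real (tan (t/2)))"
proof -
  have "arctan (tan (t/2)) = t/2" using assms by (intro arctan_tan) auto
  then have "2 * arctan (tan (t/2)) = t" by simp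
  then show ?thesis by (metis L1)
qed

lemma L3: fixes C u :: real assumes "0 < C" "C < 1"
  shows "1/complex_of_real C + complex_of_real ((1-C^2)/C^2) / ((1 + \<i> * u) / (1 - \<i> * u) - 1/ complex_of_real C)
     = - ((1 + \<i> * ((1+C)/(1-C) * u)) / (1 - \<i> * ((1+C)/(1-C)*u)))"
proof -
  define D where "D = 1 - \<i> * complex_of_real u"
  define E where "E = 1 + \<i> * complex_of_real u"
  define G where "G = complex_of_real (1-C) - \<i> * complex_of_real ((1+C)*u)"
  define F where "F = complex_of_real (1-C) + \<i> * complex_of_real ((1+C)*u)"
  have Cn: "complex_of_real C \<noteq> 0" using assms by simp
  have n1: "D \<noteq> 0" unfolding D_def by (simp add: complex_eq_iff)
  have n2: "G \<noteq> 0" unfolding G_def using assms by (simp add: complex_eq_iff)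
  have n4: "complex_of_real (1 - C) \<noteq> 0" using assms by simp
  have r1: "(1 + \<i> * ((1+C)/(1-C) * u)) / (1 - \<i> * ((1+C)/(1-C)*u)) = F / G"
  proof -
    have a: "(1 + \<i> * ((1+C)/(1-C) * u)) = F / complex_of_real (1-C)"
      unfolding F_def using n4 by (simp add: field_simps)
    have b: "(1 - \<i> * ((1+C)/(1-C) * u)) = G / complex_of_real (1-C)"
      unfolding G_def using n4 by (simp add: field_simps)
    show ?thesis unfolding a b using n4 by simp
  qed
  have r2: "(1 + \<i> * u) / (1 - \<i> * u) - 1/ complex_of_real C = - G / (complex_of_real C * D)"
    unfolding G_def D_def using n1[unfolded D_def] Cn
    by (simp add: field_simps)
  have key: "G - complex_of_real (1-C^2) * D = - complex_of_real C * F"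
    unfolding G_def D_def F_def
    apply (simp only: complex_eq_iff)
    apply (simp add: power2_eq_square)
    apply (simp add: algebra_simps)
    done
  have h1: "1/c + ((1-c*c)/(c*c)) / (- G / (c * D)) = (G - (1-c*c) * D) / (c * G)"
    if "D \<noteq> 0" "G\<noteq>0" "c \<noteq> 0" for c D G :: complex
  proof -
    have "((1-c*c)/(c*c)) / (- G / (c * D)) = - ((1-c*c) * D) / (c * G)"
      using that by (simp add: divide_simps)
    then show ?thesis using that by (simp add: diff_divide_distrib)
  qed
  have e1: "complex_of_real ((1-C^2)/C^2) = (1 - complex_of_real C * complex_of_real C)/(complex_of_real C * complex_of_real C)"
    by (simp add: power2_eq_square)
  have e2: "complex_of_real (1-C^2) = 1 - complex_of_real C * complex_of_real C"
    by (simp add: power2_eq_square)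
  have "1/complex_of_real C + complex_of_real ((1-C^2)/C^2) / (- G / (complex_of_real C * D))
      = (G - complex_of_real (1-C^2) * D) / (complex_of_real C * G)"
    unfolding e1 e2 using n1 n2 Cn by (rule h1)
  also have "\<dots> = - (F / G)" unfolding key using Cn n2 by simp
  finally show ?thesis unfolding r1 r2 .
qed

lemma arctan_lip: assumes "p \<le> q" shows "arctan q - arctan p \<le> q - p"
proof (cases "p = q")
  case False
  then have "p < q" using assms by simp
  have d: "\<And>y. ((\<lambda>y. arctan y - y) has_real_derivative inverse (1 + y\<^sup>2) - 1) (at y)"
    by (intro DERIV_diff DERIV_arctan DERIV_ident)
  from MVT2[OF \<open>p < q\<close>, of "\<lambda>y. arctan y - y" "\<lambda>y. inverse (1 + y\<^sup>2) - 1", OF d]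
  obtain z where "(arctan q - q) - (arctan p - p) = (q - p) * (inverse (1 + z\<^sup>2) - 1)"
    by blast
  moreover have "inverse (1 + z\<^sup>2) \<le> 1"
  proof -
    have "1 \<le> 1 + z\<^sup>2" by simp
    moreover have "0 < 1 + z\<^sup>2" by (simp add: add_pos_nonneg)
    ultimately show ?thesis by (simp add: inverse_eq_divide divide_le_eq_1)
  qed
  then have "(q - p) * (inverse (1 + z\<^sup>2) - 1) \<le> 0" using \<open>p < q\<close> by (intro mult_nonneg_nonpos) auto
  ultimately show ?thesis by linarith
qed simp

lemma basics:
  assumes "g \<ge> 2"
  defines "x \<equiv> pi / real (NN g)"
  shows "0 < x" "x \<le> pi/12" "x < alpha g" "alpha g < 2*x"
    "sin (alpha g) = sqrt 2 * sin x" "cos (alpha g) = sqrt (1 - 2 * (sin x)\<^sup>2)"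
    "sin x < 1/3" "0 < sin x" "(cos x) \<ge> (47/50)" "cos (alpha g) \<ge> (22/25)" "cos (alpha g) < 1"
proof -
  have N: "real (NN g) \<ge> 12" using assms unfolding NN_def by simp
  show x0: "0 < x" unfolding x_def using N by simp
  show x12: "x \<le> pi/12" unfolding x_def using N by (simp add: field_simps)
  have xh: "x < pi/2" using x12 pi_gt_zero by linarith
  have s0: "0 < sin x" using x0 xh by (simp add: sin_gt_zero2)
  have "sin x \<le> x" using x0 xh sin_x_le_x by simp
  then show s3: "sin x < 1/3" using x12 pi_less_4 by simp
  show "0 < sin x" by (fact s0)
  have cx: "cos x > 0" using x0 xh by (simp add: cos_gt_zero_pi)
  have c2: "(cos x)^2 = 1 - (sin x)^2" by (simp add: cos_squared_eq)
  have ss: "(sin x)^2 < (1/3)^2" using s0 s3 by (intro power_strict_mono) auto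
  have ss': "(sin x)^2 < 1/9" using ss by (simp add: power_divide)
  have n94: "((47/50)::real)^2 < 8/9" by (simp add: power2_eq_square)
  have "8/9 < (cos x)^2" using c2 ss' by linarith
  then have "(47/50)^2 \<le> (cos x)^2" using n94 by (meson less_imp_le less_trans)
  then show c94: "cos x \<ge> (47/50)" using cx by (meson power2_le_imp_le less_imp_le)
  have r2: "sqrt 2 * sin x < 1"
  proof -
    have "sqrt 2 < 3" using sqrt2_less_2 by simp
    then have "sqrt 2 * sin x < 3 * (1/3)" using s3 s0 by (intro mult_strict_mono) auto
    then show ?thesis by simp
  qed
  have r2b: "\<bar>sqrt 2 * sin x\<bar> \<le> 1" using r2 s0 by simp
  show sa: "sin (alpha g) = sqrt 2 * sin x" unfolding alpha_def x_def[symmetric]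
    using r2b by (simp add: abs_le_iff)
  show ca: "cos (alpha g) = sqrt (1 - 2 * (sin x)\<^sup>2)" unfolding alpha_def x_def[symmetric]
    using r2b by (subst cos_arcsin) (auto simp: abs_le_iff power_mult_distrib)
  have n88: "((22/25)::real)^2 < 7/9" by (simp add: power2_eq_square)
  have "7/9 < 1 - 2 * (sin x)\<^sup>2" using ss' by linarith
  then have "(22/25)^2 \<le> 1 - 2 * (sin x)\<^sup>2" using n88 by (meson less_imp_le less_trans)
  then show "cos (alpha g) \<ge> (22/25)" unfolding ca by (rule real_le_rsqrt)
  have "1 - 2 * (sin x)\<^sup>2 < 1" using s0 by simp
  then show "cos (alpha g) < 1" unfolding ca by (intro real_less_lsqrt) simp_all
  have "sin x < sqrt 2 * sin x" using s0 by (simp add: mult_less_cancel_right1)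
  then have "arcsin (sin x) < arcsin (sqrt 2 * sin x)"
    using r2b s0 by (subst arcsin_less_mono) auto
  then show "x < alpha g" unfolding alpha_def x_def[symmetric] using x0 xh by (simp add: arcsin_sin)
  have "sqrt 2 < 2 * (47/50)"
    by (rule real_less_lsqrt) (simp_all add: power2_eq_square)
  then have "sqrt 2 < 2 * cos x" using c94 by simp
  then have "sin x * sqrt 2 < sin x * (2 * cos x)" using s0 by (rule mult_strict_left_mono)
  moreover have "sin (2*x) = sin x * (2 * cos x)" by (simp add: sin_double)
  ultimately have "sqrt 2 * sin x < sin (2*x)" by (simp add: mult.commute)
  moreover have "\<bar>sin (2*x)\<bar> \<le> 1" by (rule abs_sin_le_one)
  ultimately have "arcsin (sqrt 2 * sin x) < arcsin (sin (2*x))"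
    using r2b by (subst arcsin_less_mono) auto
  then show "alpha g < 2*x" unfolding alpha_def x_def[symmetric] using x0 x12 by (simp add: arcsin_sin)
qed

lemma fac: fixes c d C T X :: complex assumes "c \<noteq> 0"
  shows "c * d * (inverse c / C + T / (c * X)) = d * (1 / C + T / X)"
  using assms by (simp add: field_simps)

lemma Mform: fixes C :: real assumes "0 < C" "C < 1" "-pi < t" "t < pi"
  shows "1/complex_of_real C + complex_of_real ((1-C^2)/C^2) / (cis t - 1/complex_of_real C)
     = - cis (2 * arctan ((1+C)/(1-C) * tan (t/2)))"
  by (subst L2[OF assms(3,4)], subst L3[OF assms(1,2)], subst L1, rule refl)

lemma Tm_eq:
  assumes C0: "0 < cos (alpha g)" and C1: "cos (alpha g) < 1" and t: "-pi < t" "t < pi"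
  shows "Tm g k (cis (phi g k + t)) = cis (phi g (sigma (int g) k) + pi +
     2 * arctan ((1 + cos (alpha g)) / (1 - cos (alpha g)) * tan (t / 2)))"
proof -
  define C where "C = cos (alpha g)"
  define p where "p = phi g k"
  define q where "q = phi g (sigma (int g) k)"
  have t2: "(tan (alpha g))^2 = (1 - C^2)/C^2"
    unfolding C_def tan_def by (simp add: power_divide sin_squared_eq)
  have cn: "cnj (ctr g k) = inverse (cis p) / complex_of_real C"
    unfolding ctr_def C_def p_def by (simp add: cis_cnj cis_inverse)
  have d: "cis (p + t) - ctr g k = cis p * (cis t - 1 / complex_of_real C)"
    unfolding ctr_def C_def p_def by (simp add: cis_mult[symmetric] field_simps)
  have "Tm g k (cis (phi g k + t)) = cis p * cis q * (inverse (cis p) / complex_of_real C +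
      complex_of_real ((1 - C^2)/C^2) / (cis p * (cis t - 1 / complex_of_real C)))"
    unfolding Tm_def p_def[symmetric] q_def[symmetric] cn d t2 by (simp add: cis_mult)
  also have "\<dots> = cis q * (1 / complex_of_real C + complex_of_real ((1 - C^2)/C^2) / (cis t - 1 / complex_of_real C))"
    by (rule fac) simp
  also have "\<dots> = cis q * (- cis (2 * arctan ((1+C)/(1-C) * tan (t/2))))"
    using C0 C1 t unfolding C_def by (subst Mform) auto
  also have "\<dots> = cis (q + pi + 2 * arctan ((1+C)/(1-C) * tan (t/2)))"
    by (simp add: cis_mult[symmetric])
  finally show ?thesis unfolding q_def C_def .
qed

lemma realineq:
  fixes cx ca sx rt :: real
  assumes C2: "ca^2 = 1 - 2* sx^2" and c2: "cx^2 = 1 - sx^2" and c94: "47/50 \<le> cx" and c1: "cx \<le> 1"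
    and C88: "22/25 \<le> ca" and C1: "ca < 1" and s0: "0 < sx" and r1: "1 \<le> rt"
  shows "4*(1-ca)/(1+ca) < cx*ca + rt* sx^2 - (4*cx^3 - 3*cx)"
proof -
  have pC: "0 < 1 + ca" using C88 by simp
  have e: "1 - ca = 2* sx^2/(1+ca)"
  proof -
    have "(1 - ca) * (1 + ca) = 2* sx^2" using C2 by (simp add: algebra_simps power2_eq_square)
    then show ?thesis using pC by (simp add: field_simps)
  qed
  have ss: "0 < sx^2" using s0 by simp
  have L: "4*(1-ca)/(1+ca) = 8* sx^2/(1+ca)^2" unfolding e using pC by (simp add: field_simps power2_eq_square)
  have b1: "(47/25)^2 \<le> (1+ca)^2" using C88 by (intro power_mono) auto
  have L2: "8* sx^2/(1+ca)^2 \<le> 8* sx^2/(47/25)^2"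
    using b1 ss pC by (intro divide_left_mono) auto
  have R1: "-(4*cx^3 - 3*cx) = cx*(4* sx^2 - 1)"
  proof -
    have "cx^3 = cx * cx^2" by (simp add: power3_eq_cube power2_eq_square)
    then show ?thesis unfolding c2 by (simp add: algebra_simps)
  qed
  have R: "cx*ca + rt* sx^2 - (4*cx^3 - 3*cx) = (4*cx + rt)* sx^2 - cx * (2* sx^2/(1+ca))"
  proof -
    have "cx*ca + rt* sx^2 - (4*cx^3 - 3*cx) = cx*ca + rt* sx^2 + cx*(4* sx^2 - 1)" using R1 by linarith
    also have "\<dots> = (4*cx + rt)* sx^2 - cx*(1 - ca)" by (simp add: algebra_simps)
    also have "\<dots> = (4*cx + rt)* sx^2 - cx * (2* sx^2/(1+ca))" by (simp only: e)
    finally show ?thesis .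
  qed
  have R2: "cx * (2* sx^2/(1+ca)) \<le> 1 * (2* sx^2/(47/25))"
  proof (rule mult_mono)
    show "2* sx^2/(1+ca) \<le> 2* sx^2/(47/25)" using C88 ss by (intro divide_left_mono) auto
  qed (use c1 c94 ss pC in auto)
  have R3: "(188/50 + 1) * sx^2 \<le> (4*cx + rt)* sx^2"
    using c94 r1 ss by (intro mult_right_mono) auto
  have "8* sx^2/(47/25)^2 < (188/50 + 1) * sx^2 - 1 * (2* sx^2/(47/25))"
    using ss by (simp add: field_simps power2_eq_square)
  then show ?thesis unfolding L R using L2 R2 R3 by linarith
qed

lemma h_ineq:
  assumes g: "g \<ge> 2"
  defines "x \<equiv> pi / real (NN g)" and "a \<equiv> alpha g"
  defines "C \<equiv> cos a"
  defines "K \<equiv> (1+C)/(1-C)"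
  shows "2*arctan (K * tan ((2*x+a)/2)) - 2*arctan (K * tan ((4*x-a)/2)) < a - x"
proof -
  note B = basics[OF g, folded x_def a_def, folded C_def]
  have x0: "0 < x" and x12: "x \<le> pi/12" and xa: "x < a" and a2x: "a < 2*x"
    and sa: "sin a = sqrt 2 * sin x" and ca: "C = sqrt (1 - 2 * (sin x)\<^sup>2)"
    and s3: "sin x < 1/3" and s0: "0 < sin x" and c94: "cos x \<ge> 47/50"
    and C88: "C \<ge> 22/25" and C1: "C < 1" using B by auto
  define A1 where "A1 = (4*x-a)/2"
  define A2 where "A2 = (2*x+a)/2"
  define D where "D = (1-C)/(1+C)"
  have D0: "0 < D" unfolding D_def using C1 C88 by simp
  have A1p: "0 < A1" unfolding A1_def using a2x x0 by simp
  have A12: "A2 - A1 = a - x" unfolding A1_def A2_def by (simp add: field_simps)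
  have A1A2: "A1 < A2" using A12 xa by simp
  have A2h: "A2 < pi/2" unfolding A2_def using a2x x12 x0 pi_gt_zero by (simp add: field_simps)
  have sA1: "0 < sin A1" using A1p A1A2 A2h by (intro sin_gt_zero2) auto
  have sA2: "0 < sin A2" using A1p A1A2 A2h by (intro sin_gt_zero2) auto
  have cA1: "0 < cos A1" using A1p A1A2 A2h by (intro cos_gt_zero_pi) auto
  have cA2: "0 < cos A2" using A1p A1A2 A2h by (intro cos_gt_zero_pi) auto
  have Kp: "0 < K" unfolding K_def using C1 C88 by simp
  have inv: "arctan (K * tan A) = pi/2 - arctan (D * (cos A / sin A))" if "0 < sin A" "0 < cos A" for A
  proof -
    have tp: "0 < K * tan A" using Kp that by (simp add: tan_def)
    have e: "1 / (K * tan A) = D * (cos A / sin A)"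
      unfolding K_def D_def tan_def using that C1 C88 by (simp add: field_simps)
    have "arctan (1 / (K * tan A)) = pi/2 - arctan (K * tan A)"
      using arctan_inverse[OF tp] by (simp only: inverse_eq_divide)
    then show ?thesis unfolding e by linarith
  qed
  have cot: "cos A1/sin A1 - cos A2/sin A2 = sin (A2 - A1)/(sin A1 * sin A2)"
    using sA1 sA2 by (simp add: sin_diff field_simps)
  have sx: "0 < sin (a - x)" using xa a2x x12 pi_gt_zero by (intro sin_gt_zero2) auto
  have sxle: "sin (a - x) \<le> a - x" using xa a2x x12 pi_gt_zero by (intro sin_x_le_x) auto
  define P where "P = sin A1 * sin A2"
  have P0: "0 < P" unfolding P_def using sA1 sA2 by simp
  have le1: "D * (cos A2 / sin A2) \<le> D * (cos A1 / sin A1)"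
  proof -
    have "0 \<le> cos A1/sin A1 - cos A2/sin A2" unfolding cot A12 using sx sA1 sA2 by simp
    then show ?thesis using D0 by (intro mult_left_mono) auto
  qed
  have "2*arctan (K * tan A2) - 2*arctan (K * tan A1)
      = 2 * (arctan (D * (cos A1 / sin A1)) - arctan (D * (cos A2 / sin A2)))"
    using inv[OF sA1 cA1] inv[OF sA2 cA2] by simp
  also have "\<dots> \<le> 2 * (D * (cos A1 / sin A1) - D * (cos A2 / sin A2))"
    using arctan_lip[OF le1] by simp
  also have "\<dots> = 2 * D * sin (a - x) / P"
  proof -
    have c2: "cos A1/sin A1 - cos A2/sin A2 = sin (a - x)/P" unfolding P_def cot A12 ..
    have "2 * (D * (cos A1 / sin A1) - D * (cos A2 / sin A2)) = 2 * D * (cos A1/sin A1 - cos A2/sin A2)"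
      by algebra
    then show ?thesis unfolding c2 by simp
  qed
  also have "\<dots> \<le> 2 * D * (a - x) / P"
    using sxle D0 P0 by (simp add: divide_right_mono)
  also have "\<dots> < a - x"
  proof -
    have twoP: "2 * P = cos (x - a) - cos (3*x)"
    proof -
      have "2 * P = cos (A1 - A2) - cos (A1 + A2)" unfolding P_def sin_times_sin by simp
      moreover have "A1 - A2 = x - a" "A1 + A2 = 3*x" unfolding A1_def A2_def by (simp_all add: field_simps)
      ultimately show ?thesis by simp
    qed
    have cxa: "cos (x - a) = cos x * C + sqrt 2 * (sin x)^2"
      unfolding cos_diff C_def[symmetric] sa by (simp add: power2_eq_square)
    have C2: "C^2 = 1 - 2*(sin x)^2"
    proof -
      have "0 \<le> 1 - 2*(sin x)^2"
      proof -
        have "(sin x)^2 < (1/3)^2" using s0 s3 by (intro power_strict_mono) auto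
        then show ?thesis by (simp add: power_divide)
      qed
      then show ?thesis unfolding ca by simp
    qed
    have r1: "1 \<le> sqrt 2" by simp
    have ri: "4*(1-C)/(1+C) < cos x * C + sqrt 2 * (sin x)^2 - (4*cos x^3 - 3*cos x)"
      by (rule realineq[OF C2 cos_squared_eq c94 cos_le_one C88 C1 s0 r1])
    then have "4 * D < 2 * P" unfolding twoP cxa cos_treble_cos D_def by simp
    then have "2 * D * (a - x) < P * (a - x)" using xa by (intro mult_strict_right_mono) auto
    then show ?thesis using P0 by (simp add: divide_simps mult.commute)
  qed
  finally show ?thesis unfolding A1_def A2_def .
qed

lemma arc_image:
  fixes f :: "complex \<Rightarrow> complex" and h :: "real \<Rightarrow> real"
  assumes t12: "t1 \<le> t2" and L: "L = t2 - t1"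
    and fe: "\<And>t. t1 \<le> t \<Longrightarrow> t \<le> t2 \<Longrightarrow> f (cis (p + t)) = cis (q + h t)"
    and cont: "continuous_on {t1..t2} h"
    and mono: "\<And>s t. t1 \<le> s \<Longrightarrow> s \<le> t \<Longrightarrow> t \<le> t2 \<Longrightarrow> h s \<le> h t"
    and l2: "h t2 - h t1 < 2*pi"
  shows "has_arc_length (f ` {cis (p + t1) * cis t | t. 0 \<le> t \<and> t \<le> L}) (h t2 - h t1)"
proof -
  define A where "A = cis (q + h t1)"
  have "f ` {cis (p + t1) * cis t | t. 0 \<le> t \<and> t \<le> L} = {A * cis s | s. 0 \<le> s \<and> s \<le> h t2 - h t1}"
  proof (intro equalityI subsetI)
    fix z assume "z \<in> f ` {cis (p + t1) * cis t | t. 0 \<le> t \<and> t \<le> L}"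
    then obtain t where t: "0 \<le> t" "t \<le> L" and z: "z = f (cis (p + t1) * cis t)" by blast
    have "z = f (cis (p + (t1 + t)))" using z by (simp add: cis_mult add.assoc)
    also have "\<dots> = cis (q + h (t1 + t))" using t L by (intro fe) auto
    also have "\<dots> = A * cis (h (t1+t) - h t1)" unfolding A_def by (simp add: cis_mult)
    finally have "z = A * cis (h (t1+t) - h t1)" .
    moreover have "h t1 \<le> h (t1 + t)" "h (t1 + t) \<le> h t2" using t L by (intro mono; simp)+
    ultimately show "z \<in> {A * cis s | s. 0 \<le> s \<and> s \<le> h t2 - h t1}" by auto
  next
    fix z assume "z \<in> {A * cis s | s. 0 \<le> s \<and> s \<le> h t2 - h t1}"
    then obtain s where s: "0 \<le> s" "s \<le> h t2 - h t1" and z: "z = A * cis s" by blast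
    obtain t where t: "t1 \<le> t" "t \<le> t2" "h t = h t1 + s"
      using IVT'[of h t1 "h t1 + s" t2] s cont t12 by auto
    have "z = cis (q + h t)" unfolding z A_def t(3) by (simp add: cis_mult add.assoc)
    also have "\<dots> = f (cis (p + t))" using t by (intro fe[symmetric]) auto
    also have "\<dots> = f (cis (p + t1) * cis (t - t1))" by (simp add: cis_mult)
    finally have zz: "z = f (cis (p + t1) * cis (t - t1))" .
    have "cis (p + t1) * cis (t - t1) \<in> {cis (p + t1) * cis t | t. 0 \<le> t \<and> t \<le> L}"
      by (intro CollectI exI[of _ "t - t1"]) (use t L in auto)
    then show "z \<in> f ` {cis (p + t1) * cis t | t. 0 \<le> t \<and> t \<le> L}" unfolding zz by (rule imageI)
  qed
  moreover have "0 \<le> h t2 - h t1" using mono[of t1 t2] t12 by simp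
  moreover have "cmod A = 1" unfolding A_def by simp
  ultimately show ?thesis unfolding has_arc_length_def using l2 by blast
qed

lemma h_cont:
  assumes "-pi < t1" "t2 < pi"
  shows "continuous_on {t1..t2} (\<lambda>t. 2 * arctan (K * tan (t/2)))"
proof (rule continuous_at_imp_continuous_on, intro ballI)
  fix t assume "t \<in> {t1..t2}"
  then have "cos (t/2) \<noteq> 0" using assms by (intro order.strict_implies_not_eq[symmetric] cos_gt_zero_pi) auto
  then show "isCont (\<lambda>t. 2 * arctan (K * tan (t/2))) t"
    by (intro continuous_intros) auto
qed

lemma h_mono:
  assumes "-pi < s" "s \<le> t" "t < pi" "0 < K"
  shows "2 * arctan (K * tan (s/2)) \<le> 2 * arctan (K * tan (t/2))"
proof -
  have "tan (s/2) \<le> tan (t/2)"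
  proof (cases "s = t")
    case False
    then show ?thesis using assms by (intro less_imp_le tan_monotone) auto
  qed simp
  then have "K * tan (s/2) \<le> K * tan (t/2)" using assms by (intro mult_left_mono) auto
  then show ?thesis by (simp add: arctan_le_iff)
qed

lemma h_odd: "2 * arctan (K * tan ((-t)/2)) = - (2 * arctan (K * tan (t/2)))"
  by (simp add: arctan_minus)

lemma phi_add: "phi g (k + j) = phi g k + 2 * real_of_int j * (pi / real (NN g))"
  unfolding phi_def by (simp add: add_divide_distrib distrib_left)

lemma ccw_PQ:
  assumes g: "g \<ge> 2"
  shows "ccw_angle (Pt g j) (Qt g j) = 2 * alpha g - 2 * (pi / real (NN g))"
proof -
  define x where "x = pi / real (NN g)"
  note B = basics[OF g, folded x_def]
  have ps: "phi g (j - 1) = phi g j - 2 * x"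
    using phi_add[of g j "-1"] unfolding x_def[symmetric] by simp
  have q: "Qt g j / Pt g j = cis (2 * alpha g - 2 * x)"
    unfolding Qt_def Pt_def cis_divide ps by (simp add: algebra_simps)
  have r: "2 * alpha g - 2 * x \<in> {-pi<..pi}" using B pi_gt_zero by auto
  show ?thesis unfolding ccw_angle_def q Arg_cis[OF r] x_def[symmetric] using B by auto
qed

theorem corollary8p3:
  fixes g :: nat and k :: int
  assumes "g \<ge> 2"
  shows "(\<exists>l. has_arc_length (Tm g k ` ccw_arc (Pt g (k + 2)) (Qt g (k + 2))) l \<and>
            l < ccw_angle (Pt g (sigma (int g) k)) (Qt g (sigma (int g) k)) / 2)
       \<and> (\<exists>l. has_arc_length (Tm g k ` ccw_arc (Pt g (k - 1)) (Qt g (k - 1))) l \<and>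
            l < ccw_angle (Pt g (sigma (int g) k + 1)) (Qt g (sigma (int g) k + 1)) / 2)"
proof -
  have g: "g \<ge> 2" by (fact assms)
  define x where "x = pi / real (NN g)"
  define a where "a = alpha g"
  define C where "C = cos a"
  define K where "K = (1+C)/(1-C)"
  define h where "h = (\<lambda>t. 2 * arctan (K * tan (t/2)))"
  define q where "q = phi g (sigma (int g) k) + pi"
  note B = basics[OF g, folded x_def a_def, folded C_def]
  have x0: "0 < x" and x12: "x \<le> pi/12" and xa: "x < a" and a2x: "a < 2*x"
    and C88: "C \<ge> 22/25" and C1: "C < 1" using B by auto
  have Kp: "0 < K" unfolding K_def using C1 C88 by simp
  have ineq: "h (2*x+a) - h (4*x-a) < a - x"
    unfolding h_def K_def C_def a_def x_def using h_ineq[OF g] by simp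
  have ang: "ccw_angle (Pt g j) (Qt g j) / 2 = a - x" for j
    unfolding ccw_PQ[OF g] a_def[symmetric] x_def[symmetric] by simp
  have fe: "Tm g k (cis (phi g k + t)) = cis (q + h t)" if "-pi < t" "t < pi" for t
  proof -
    have c0: "0 < cos (alpha g)" "cos (alpha g) < 1" using C88 C1 unfolding C_def a_def by auto
    show ?thesis using Tm_eq[OF c0 that, of k] unfolding q_def h_def K_def C_def a_def by simp
  qed
  have arc: "has_arc_length (Tm g k ` {cis (phi g k + t1) * cis t | t. 0 \<le> t \<and> t \<le> 2*a - 2*x}) (h t2 - h t1)"
    if "-pi < t1" "t1 \<le> t2" "t2 < pi" "2*a - 2*x = t2 - t1" "h t2 - h t1 < 2*pi" for t1 t2
  proof (rule arc_image[where q = q])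
    show "continuous_on {t1..t2} h" unfolding h_def using that by (intro h_cont) auto
    show "h s \<le> h t" if "t1 \<le> s" "s \<le> t" "t \<le> t2" for s t
      unfolding h_def using that \<open>-pi < t1\<close> \<open>t2 < pi\<close> Kp by (intro h_mono) auto
    show "Tm g k (cis (phi g k + t)) = cis (q + h t)" if "t1 \<le> t" "t \<le> t2" for t
      using that \<open>-pi < t1\<close> \<open>t2 < pi\<close> by (intro fe) auto
  qed (use that in auto)
  have lt: "a - x < 2*pi" using xa a2x x12 x0 pi_gt_zero by linarith
  have P1: "Pt g (k + 2) = cis (phi g k + (4*x - a))"
    unfolding Pt_def a_def[symmetric] using phi_add[of g k 2] unfolding x_def[symmetric] by (simp add: algebra_simps)
  have P2: "Pt g (k - 1) = cis (phi g k + (-2*x - a))"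
  proof -
    have "phi g (k - 1) = phi g k - 2 * x" using phi_add[of g k "-1"] unfolding x_def[symmetric] by simp
    then have "phi g (k - 1) - a = phi g k + (-2*x - a)" by linarith
    then show ?thesis unfolding Pt_def a_def[symmetric] by (rule arg_cong)
  qed
  have arc1: "ccw_arc (Pt g (k + 2)) (Qt g (k + 2)) = {cis (phi g k + (4*x - a)) * cis t | t. 0 \<le> t \<and> t \<le> 2*a - 2*x}"
  proof -
    have e: "ccw_angle (Pt g (k + 2)) (Qt g (k + 2)) = 2*a - 2*x"
      unfolding ccw_PQ[OF g] a_def[symmetric] x_def[symmetric] ..
    show ?thesis unfolding ccw_arc_def e by (simp only: P1)
  qed
  have arc2: "ccw_arc (Pt g (k - 1)) (Qt g (k - 1)) = {cis (phi g k + (-2*x - a)) * cis t | t. 0 \<le> t \<and> t \<le> 2*a - 2*x}"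
  proof -
    have e: "ccw_angle (Pt g (k - 1)) (Qt g (k - 1)) = 2*a - 2*x"
      unfolding ccw_PQ[OF g] a_def[symmetric] x_def[symmetric] ..
    show ?thesis unfolding ccw_arc_def e by (simp only: P2)
  qed
  have A: "has_arc_length (Tm g k ` ccw_arc (Pt g (k + 2)) (Qt g (k + 2))) (h (2*x+a) - h (4*x-a))"
    unfolding arc1 using ineq lt xa a2x x12 x0 pi_gt_zero by (intro arc) auto
  have odd1: "h (a - 4*x) = - h (4*x - a)"
    using h_odd[of K "4*x - a"] unfolding h_def by (simp add: minus_diff_eq)
  have odd2: "h (-2*x - a) = - h (2*x + a)"
    using h_odd[of K "2*x + a"] unfolding h_def by simp
  have "has_arc_length (Tm g k ` ccw_arc (Pt g (k - 1)) (Qt g (k - 1))) (h (a - 4*x) - h (-2*x - a))"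
    unfolding arc2 using ineq lt xa a2x x12 x0 pi_gt_zero odd1 odd2 by (intro arc) auto
  then have A2: "has_arc_length (Tm g k ` ccw_arc (Pt g (k - 1)) (Qt g (k - 1))) (h (2*x+a) - h (4*x-a))"
    unfolding odd1 odd2 by simp
  show ?thesis unfolding ang using A A2 ineq by blast
qed

end
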